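(* If $X'$ is separable in the weak$^*$ topology $\sigma(X',X)$, then every multimeasure $M:\Sigma\to c(X)$ satisfies the countable chain condition.
   Context: $(\Omega,\Sigma)$ is a measurable space and $X$ is a Hausdorff locally convex space with dual $X'$. $c(X)$ is the family of nonempty closed convex subsets of $X$; $s(x',C)=\sup\{\langle x',x\rangle:x\in C\}$. A multimeasure is a map $M:\Sigma\to c(X)$ such that for every $x'\in X'$ the set function $s(x',M(\cdot))$ is a $\sigma$-finite countably additive measure with values in $(-\infty,+\infty]$. $\mathcal N(M)=\{E\in\Sigma:M(E)=\{0\}\}$. $M$ satisfies the countable chain condition if every family of pairwise disjoint sets in $\Sigma\setminus\mathcal N(M)$ is at most countable. *)

theory Defs
  imports "HOL-Analysis.Analysis"
begin

definition tvs_ops_continuous :: "('x::{real_vector, topological_space}) itself \<Rightarrow> bool" where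
  "tvs_ops_continuous _ \<longleftrightarrow>
     continuous_on UNIV (\<lambda>(x::'x, y::'x). x + y) \<and>
     continuous_on UNIV (\<lambda>(a::real, x::'x). a *\<^sub>R x)"

definition locally_convex :: "('x::{real_vector, topological_space}) itself \<Rightarrow> bool" where
  "locally_convex _ \<longleftrightarrow>
     (\<forall>U::'x set. open U \<and> 0 \<in> U \<longrightarrow> (\<exists>V. open V \<and> convex V \<and> 0 \<in> V \<and> V \<subseteq> U))"

definition topdual :: "('x::{real_vector, topological_space} \<Rightarrow> real) set" where
  "topdual = {f. linear f \<and> continuous_on UNIV f}"

text \<open>Weak-star topology sigma(X',X): the topology of pointwise convergence on X',
  i.e. the subspace topology induced by the product topology on X \<Rightarrow> real.\<close>
definition weak_star_topology :: "('x::{real_vector, topological_space} \<Rightarrow> real) topology" where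
  "weak_star_topology = subtopology (powertop_real UNIV) topdual"

definition separable_top :: "'a topology \<Rightarrow> bool" where
  "separable_top T \<longleftrightarrow> (\<exists>D. countable D \<and> D \<subseteq> topspace T \<and> T closure_of D = topspace T)"

definition cX :: "('x::{real_vector, topological_space}) set set" where
  "cX = {C. C \<noteq> {} \<and> closed C \<and> convex C}"

definition supp_fun :: "('x \<Rightarrow> real) \<Rightarrow> 'x set \<Rightarrow> ereal" where
  "supp_fun f C = (SUP x\<in>C. ereal (f x))"

definition sigma_finite_ca_measure :: "'a set \<Rightarrow> 'a set set \<Rightarrow> ('a set \<Rightarrow> ereal) \<Rightarrow> bool" where
  "sigma_finite_ca_measure \<Omega> \<Sigma> \<mu> \<longleftrightarrow>
     (\<forall>E\<in>\<Sigma>. \<mu> E \<noteq> -\<infinity>) \<and>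
     \<mu> {} = 0 \<and>
     (\<forall>A::nat \<Rightarrow> 'a set. range A \<subseteq> \<Sigma> \<longrightarrow> disjoint_family A \<longrightarrow>
         (\<lambda>n. \<mu> (A n)) sums \<mu> (\<Union>n. A n)) \<and>
     (\<exists>B::nat \<Rightarrow> 'a set. range B \<subseteq> \<Sigma> \<and> (\<Union>n. B n) = \<Omega> \<and> (\<forall>n. \<mu> (B n) < \<infinity>))"

definition multimeasure :: "'a set \<Rightarrow> 'a set set \<Rightarrow> ('a set \<Rightarrow> 'x::{real_vector, topological_space} set) \<Rightarrow> bool" where
  "multimeasure \<Omega> \<Sigma> M \<longleftrightarrow>
     (\<forall>E\<in>\<Sigma>. M E \<in> cX) \<and>
     (\<forall>f\<in>topdual. sigma_finite_ca_measure \<Omega> \<Sigma> (\<lambda>E. supp_fun f (M E)))"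

definition null_sets_mm :: "'a set set \<Rightarrow> ('a set \<Rightarrow> 'x::zero set) \<Rightarrow> 'a set set" where
  "null_sets_mm \<Sigma> M = {E\<in>\<Sigma>. M E = {0}}"

definition countable_chain_condition :: "'a set set \<Rightarrow> ('a set \<Rightarrow> 'x::zero set) \<Rightarrow> bool" where
  "countable_chain_condition \<Sigma> M \<longleftrightarrow>
     (\<forall>F. F \<subseteq> \<Sigma> - null_sets_mm \<Sigma> M \<and> disjoint F \<longrightarrow> countable F)"

end

theory Submission imports Defs begin
lemma hb_ext:
  fixes p :: "'x::real_vector \<Rightarrow> real" and x0 :: 'x
  assumes sub: "\<And>u w. p (u+w) \<le> p u + p w"
  and hom: "\<And>c v. c > 0 \<Longrightarrow> p (c *\<^sub>R v) = c * p v"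
  and nn: "\<And>v. p v \<ge> 0" and px0: "p x0 > 0"
  shows "\<exists>f. linear f \<and> (\<forall>v. f v \<le> p v) \<and> f x0 = p x0"
proof -
  have p0: "p 0 = 0" using hom[of 2 0] by simp
  have x0nz: "x0 \<noteq> 0" using px0 p0 by auto
  define good where "good G \<longleftrightarrow>
     (\<forall>v a b. (v,a)\<in>G \<longrightarrow> (v,b)\<in>G \<longrightarrow> a=b) \<and>
     (\<forall>v w a b. (v,a)\<in>G \<longrightarrow> (w,b)\<in>G \<longrightarrow> (v+w,a+b)\<in>G) \<and>
     (\<forall>v a c. (v,a)\<in>G \<longrightarrow> (c *\<^sub>R v, c*a)\<in>G) \<and>
     (\<forall>v a. (v,a)\<in>G \<longrightarrow> a \<le> p v) \<and> (x0, p x0)\<in>G" for G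
  define A where "A = {G. good G}"
  define G0 where "G0 = {(c *\<^sub>R x0, c * p x0) | c. True}"
  have G0: "good G0"
    unfolding good_def G0_def
  proof (intro conjI allI impI)
    fix v a b assume "(v,a) \<in> {(c *\<^sub>R x0, c * p x0) | c. True}" "(v,b) \<in> {(c *\<^sub>R x0, c * p x0) | c. True}"
    then obtain c d where "v = c *\<^sub>R x0" "a = c * p x0" "v = d *\<^sub>R x0" "b = d * p x0" by blast
    then show "a = b" using x0nz by (metis scaleR_cancel_right)
  next
    fix v a c assume "(v,a) \<in> {(c *\<^sub>R x0, c * p x0) | c. True}"
    then obtain d where "v = d *\<^sub>R x0" "a = d * p x0" by blast
    then show "(c *\<^sub>R v, c*a) \<in> {(c *\<^sub>R x0, c * p x0) | c. True}"
      by (auto intro!: exI[of _ "c*d"])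
  next
    fix v a assume "(v,a) \<in> {(c *\<^sub>R x0, c * p x0) | c. True}"
    then obtain d where d: "v = d *\<^sub>R x0" "a = d * p x0" by blast
    show "a \<le> p v"
    proof (cases "d > 0")
      case True then show ?thesis using d hom by simp
    next
      case False then have "a \<le> 0" using d px0 by (simp add: mult_nonpos_nonneg)
      then show ?thesis using nn[of v] by linarith
    qed
  next
    show "(x0, p x0) \<in> {(c *\<^sub>R x0, c * p x0) | c. True}" by (auto intro!: exI[of _ 1])
  next
    fix v w a b assume "(v,a) \<in> {(c *\<^sub>R x0, c * p x0) | c. True}" "(w,b) \<in> {(c *\<^sub>R x0, c * p x0) | c. True}"
    then obtain c d where "v = c *\<^sub>R x0" "a = c * p x0" "w = d *\<^sub>R x0" "b = d * p x0" by blast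
    then show "(v+w,a+b) \<in> {(c *\<^sub>R x0, c * p x0) | c. True}"
      by (auto intro!: exI[of _ "c+d"] simp: scaleR_add_left distrib_right)
  qed
  have "\<exists>M\<in>A. \<forall>X\<in>A. M \<subseteq> X \<longrightarrow> X = M"
  proof (rule Zorn_Lemma2, intro ballI)
    fix C assume C: "C \<in> chains A"
    show "\<exists>U\<in>A. \<forall>X\<in>C. X \<subseteq> U"
    proof (cases "C = {}")
      case True then show ?thesis using G0 A_def by auto
    next
      case False
      have CA: "\<And>X. X \<in> C \<Longrightarrow> good X" using chainsD2[OF C] A_def by auto
      have ch: "\<And>X Y. X \<in> C \<Longrightarrow> Y \<in> C \<Longrightarrow> X \<subseteq> Y \<or> Y \<subseteq> X" using chainsD[OF C] by blast
      have two: "\<exists>Z\<in>C. x \<in> Z \<and> y \<in> Z" if "x \<in> \<Union>C" "y \<in> \<Union>C" for x y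
        using that ch by blast
      have "good (\<Union>C)"
        unfolding good_def
      proof (intro conjI allI impI)
        fix v a b assume "(v,a) \<in> \<Union>C" "(v,b) \<in> \<Union>C"
        then obtain Z where "Z \<in> C" "(v,a)\<in>Z" "(v,b)\<in>Z" using two by blast
        then show "a = b" using CA unfolding good_def by blast
      next
        fix v w a b assume "(v,a) \<in> \<Union>C" "(w,b) \<in> \<Union>C"
        then obtain Z where "Z \<in> C" "(v,a)\<in>Z" "(w,b)\<in>Z" using two by blast
        then show "(v+w,a+b) \<in> \<Union>C" using CA unfolding good_def by blast
      next
        fix v a c assume "(v,a) \<in> \<Union>C"
        then obtain Z where "Z \<in> C" "(v,a)\<in>Z" by blast
        then show "(c *\<^sub>R v, c*a) \<in> \<Union>C" using CA unfolding good_def by blast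
      next
        fix v a assume "(v,a) \<in> \<Union>C"
        then obtain Z where "Z \<in> C" "(v,a)\<in>Z" by blast
        then show "a \<le> p v" using CA unfolding good_def by blast
      next
        obtain Z where "Z \<in> C" using False by blast
        then show "(x0, p x0) \<in> \<Union>C" using CA unfolding good_def by blast
      qed
      then show ?thesis using A_def by auto
    qed
  qed
  then obtain G where GA: "good G" and max: "\<And>X. good X \<Longrightarrow> G \<subseteq> X \<Longrightarrow> X = G"
    using A_def by auto
  have fG1: "\<And>v a b. (v,a)\<in>G \<Longrightarrow> (v,b)\<in>G \<Longrightarrow> a=b"
    and add: "\<And>v w a b. (v,a)\<in>G \<Longrightarrow> (w,b)\<in>G \<Longrightarrow> (v+w,a+b)\<in>G"
    and scl: "\<And>v a c. (v,a)\<in>G \<Longrightarrow> (c *\<^sub>R v, c*a)\<in>G"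
    and dom: "\<And>v a. (v,a)\<in>G \<Longrightarrow> a \<le> p v"
    and gx0: "(x0, p x0)\<in>G" using GA unfolding good_def by blast+
  have z: "(0,0) \<in> G" using scl[OF gx0, of 0] by simp
  have total: "\<exists>a. (y,a) \<in> G" for y
  proof (rule ccontr)
    assume ny: "\<nexists>a. (y, a) \<in> G"
    define L where "L = {a - p (u - y) | u a. (u,a) \<in> G}"
    have Lbd: "l \<le> p (w + y) - b" if "l \<in> L" "(w,b) \<in> G" for l w b
    proof -
      obtain u a where ua: "(u,a)\<in>G" "l = a - p (u - y)" using \<open>l \<in> L\<close> L_def by auto
      have "b + a \<le> p (w + u)" using dom[OF add[OF that(2) ua(1)]] .
      also have "\<dots> \<le> p (w + y) + p (u - y)" using sub[of "w+y" "u-y"] by (simp add: algebra_simps)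
      finally show ?thesis using ua by simp
    qed
    have Lne: "L \<noteq> {}" using z L_def by auto
    have Lbdd: "bdd_above L" using Lbd[OF _ z] by (auto simp: bdd_above_def)
    define c where "c = Sup L"
    have c1: "c \<le> p (w + y) - b" if "(w,b) \<in> G" for w b
      unfolding c_def using Lbd[OF _ that] Lne by (intro cSup_least) auto
    have c2: "a - p (u - y) \<le> c" if "(u,a) \<in> G" for u a
      unfolding c_def using that Lbdd by (intro cSup_upper) (auto simp: L_def)
    define G' where "G' = {(v + t *\<^sub>R y, a + t * c) | v a t. (v,a) \<in> G}"
    have uniq: "v = v' \<and> t = t'" if "(v,a)\<in>G" "(v',a')\<in>G" "v + t *\<^sub>R y = v' + t' *\<^sub>R y" for v a t v' a' t'
    proof (cases "t = t'")
      case True then show ?thesis using that by simp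
    next
      case False
      have "(t - t') *\<^sub>R y = v' - v" using that(3) by (simp add: algebra_simps)
      then have "(1/(t-t')) *\<^sub>R ((t - t') *\<^sub>R y) = (1/(t-t')) *\<^sub>R (v' + (-1) *\<^sub>R v)" by simp
      then have "y = (1/(t-t')) *\<^sub>R (v' + (-1) *\<^sub>R v)" using False by simp
      moreover have "((1/(t-t')) *\<^sub>R (v' + (-1) *\<^sub>R v), (1/(t-t')) * (a' + (-1) * a)) \<in> G"
        by (intro scl add that)
      ultimately show ?thesis using ny by metis
    qed
    have memG': "(u + t *\<^sub>R y, b + t*c) \<in> G'" if "(u,b)\<in>G" for u b t
      unfolding G'_def using that by blast
    have "good G'"
      unfolding good_def
    proof (intro conjI allI impI)
      fix v a b assume "(v,a) \<in> G'" "(v,b) \<in> G'"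
      then obtain v1 a1 t1 v2 a2 t2 where "(v1,a1)\<in>G" "(v2,a2)\<in>G" "v = v1 + t1 *\<^sub>R y" "a = a1 + t1*c"
        "v = v2 + t2 *\<^sub>R y" "b = a2 + t2*c" unfolding G'_def by blast
      then show "a = b" using uniq fG1 by metis
    next
      fix v w a b assume "(v,a) \<in> G'" "(w,b) \<in> G'"
      then obtain v1 a1 t1 v2 a2 t2 where "(v1,a1)\<in>G" "(v2,a2)\<in>G" "v = v1 + t1 *\<^sub>R y" "a = a1 + t1*c"
        "w = v2 + t2 *\<^sub>R y" "b = a2 + t2*c" unfolding G'_def by blast
      then show "(v+w,a+b) \<in> G'" using memG'[OF add, of v1 a1 v2 a2 "t1+t2"]
        by (simp add: algebra_simps)
    next
      fix v a d assume "(v,a) \<in> G'"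
      then obtain v1 a1 t1 where "(v1,a1)\<in>G" "v = v1 + t1 *\<^sub>R y" "a = a1 + t1*c"
        unfolding G'_def by blast
      then show "(d *\<^sub>R v, d*a) \<in> G'" using memG'[OF scl, of v1 a1 d "d*t1"]
        by (simp add: algebra_simps)
    next
      fix v a assume "(v,a) \<in> G'"
      then obtain u b t where ub: "(u,b)\<in>G" "v = u + t *\<^sub>R y" "a = b + t*c"
        unfolding G'_def by blast
      show "a \<le> p v"
      proof (cases "t = 0")
        case True then show ?thesis using ub dom by simp
      next
        case False
        show ?thesis
        proof (cases "t > 0")
          case True
          have "c \<le> p ((1/t) *\<^sub>R u + y) - (1/t)*b" using c1[OF scl[OF ub(1), of "1/t"]] .
          then have "t * c \<le> t * (p ((1/t) *\<^sub>R u + y) - (1/t)*b)" using True by (simp add: mult_left_mono)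
          also have "\<dots> = t * p ((1/t) *\<^sub>R u + y) - b" using True by (simp add: algebra_simps)
          also have "\<dots> = p (t *\<^sub>R ((1/t) *\<^sub>R u + y)) - b" using hom[OF True] by simp
          also have "t *\<^sub>R ((1/t) *\<^sub>R u + y) = v" using True ub by (simp add: algebra_simps)
          finally show ?thesis using ub by simp
        next
          case False
          define s where "s = -t"
          have s: "s > 0" using False \<open>t \<noteq> 0\<close> s_def by simp
          have "(1/s)*b - p ((1/s) *\<^sub>R u - y) \<le> c" using c2[OF scl[OF ub(1), of "1/s"]] by simp
          then have "s * ((1/s)*b - p ((1/s) *\<^sub>R u - y)) \<le> s * c" using s by (simp add: mult_left_mono)
          then have "b - s * p ((1/s) *\<^sub>R u - y) \<le> s * c" using s by (simp add: algebra_simps)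
          then have "b - p (s *\<^sub>R ((1/s) *\<^sub>R u - y)) \<le> s * c" using hom[OF s] by simp
          moreover have "s *\<^sub>R ((1/s) *\<^sub>R u - y) = v" using s ub s_def by (simp add: algebra_simps)
          ultimately show ?thesis using ub s_def by simp
        qed
      qed
    next
      show "(x0, p x0) \<in> G'" using memG'[OF gx0, of 0] by simp
    qed
    moreover have "G \<subseteq> G'" using memG'[of _ _ 0] by auto
    moreover have "(y, c) \<in> G'" using memG'[OF z, of 1] by simp
    ultimately show False using max ny by blast
  qed
  define f where "f v = (THE a. (v,a) \<in> G)" for v
  have fG: "(v, f v) \<in> G" for v
    unfolding f_def using total[of v] fG1 by (metis theI)
  have feq: "(v,a) \<in> G \<Longrightarrow> f v = a" for v a using fG fG1 by blast
  have "linear f"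
    by (rule linearI) (auto intro!: feq add scl fG)
  moreover have "\<forall>v. f v \<le> p v" using fG dom by blast
  moreover have "f x0 = p x0" using feq gx0 by blast
  ultimately show ?thesis by blast
qed
lemma dual_sep:
  fixes x0 :: "'x::{real_vector,t2_space}"
  assumes tvs: "tvs_ops_continuous TYPE('x)" and lc: "locally_convex TYPE('x)" and x0: "x0 \<noteq> 0"
  shows "\<exists>f\<in>topdual. f x0 > 0"
proof -
  have cadd: "continuous_on UNIV (\<lambda>(x::'x, y::'x). x + y)"
    and csc: "continuous_on UNIV (\<lambda>(a::real, x::'x). a *\<^sub>R x)"
    using tvs unfolding tvs_ops_continuous_def by auto
  have caff: "continuous_on UNIV (\<lambda>z::'x. k *\<^sub>R (z + z0))" for k z0
  proof -
    have "continuous_on UNIV ((\<lambda>(x::'x, y::'x). x + y) \<circ> (\<lambda>z. (z, z0)))"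
      by (rule continuous_on_compose) (auto intro!: continuous_on_Pair continuous_on_id continuous_on_const
           intro: continuous_on_subset[OF cadd])
    then have c1: "continuous_on UNIV (\<lambda>z::'x. z + z0)" by (simp add: o_def)
    have "continuous_on UNIV ((\<lambda>(a::real, x::'x). a *\<^sub>R x) \<circ> (\<lambda>z. (k, z + z0)))"
      by (rule continuous_on_compose) (auto intro!: continuous_on_Pair c1 continuous_on_const
           intro: continuous_on_subset[OF csc])
    then show ?thesis by (simp add: o_def)
  qed
  have cray: "continuous_on UNIV (\<lambda>s::real. s *\<^sub>R v)" for v :: 'x
  proof -
    have "continuous_on UNIV ((\<lambda>(a::real, x::'x). a *\<^sub>R x) \<circ> (\<lambda>s. (s, v)))"
      by (rule continuous_on_compose) (auto intro!: continuous_on_Pair continuous_on_id continuous_on_const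
           intro: continuous_on_subset[OF csc])
    then show ?thesis by (simp add: o_def)
  qed
  have ov: "open (g -` B)" if "continuous_on UNIV g" "open B" for g :: "'b::topological_space \<Rightarrow> 'c::topological_space" and B
    using continuous_on_open_vimage[OF open_UNIV, of g] that by auto
  obtain U where U: "open U" "(0::'x) \<in> U" "x0 \<notin> U" using t1_space[of 0 x0] x0 by metis
  then obtain W where W: "open W" "convex W" "0 \<in> W" "W \<subseteq> U"
    using lc unfolding locally_convex_def by blast
  have x0W: "x0 \<notin> W" using W U by blast
  have absorb: "\<exists>s>0. s *\<^sub>R v \<in> W" for v
  proof -
    have "open ((\<lambda>s::real. s *\<^sub>R v) -` W)"
      by (rule ov[OF cray W(1)])
    moreover have "0 \<in> (\<lambda>s::real. s *\<^sub>R v) -` W" using W by simp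
    ultimately obtain d where d: "d > 0" "ball 0 d \<subseteq> (\<lambda>s::real. s *\<^sub>R v) -` W"
      unfolding open_contains_ball by blast
    then have "d/2 \<in> ball 0 d" by simp
    then have "(d/2) *\<^sub>R v \<in> W" using d(2) by blast
    then show ?thesis using d(1) by (intro exI[of _ "d/2"]) auto
  qed
  define S where "S v = {t::real. 0 < t \<and> inverse t *\<^sub>R v \<in> W}" for v
  define p where "p v = Inf (S v)" for v
  have Sne: "S v \<noteq> {}" for v
  proof -
    obtain s where "s > 0" "s *\<^sub>R v \<in> W" using absorb by blast
    then have "inverse s \<in> S v" by (simp add: S_def)
    then show ?thesis by blast
  qed
  have Sbdd: "bdd_below (S v)" for v by (auto simp: S_def bdd_below_def intro!: exI[of _ 0])
  have plow: "p v \<le> t" if "t \<in> S v" for v t unfolding p_def using that Sbdd by (rule cInf_lower)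
  have pgr: "c \<le> p v" if "\<And>t. t \<in> S v \<Longrightarrow> c \<le> t" for v c unfolding p_def using Sne that by (rule cInf_greatest)
  have nn: "p v \<ge> 0" for v by (rule pgr) (auto simp: S_def)
  have pW: "p v \<le> 1" if "v \<in> W" for v using plow[of 1 v] that by (simp add: S_def)
  have px0: "p x0 \<ge> 1"
  proof (rule pgr)
    fix t assume t: "t \<in> S x0"
    show "1 \<le> t"
    proof (rule ccontr)
      assume "\<not> 1 \<le> t"
      then have "t < 1" by simp
      have tp: "0 < t" "inverse t *\<^sub>R x0 \<in> W" using t by (auto simp: S_def)
      have "t *\<^sub>R (inverse t *\<^sub>R x0) + (1 - t) *\<^sub>R 0 \<in> W"
        using convexD[OF W(2) tp(2) W(3), of t "1-t"] tp \<open>t < 1\<close> by simp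
      then have "x0 \<in> W" using tp by simp
      then show False using x0W by blast
    qed
  qed
  have hom: "p (c *\<^sub>R v) = c * p v" if c: "c > 0" for c v
  proof -
    have "p (c *\<^sub>R v) / c \<le> p v"
    proof (rule pgr)
      fix s assume "s \<in> S v"
      then have "0 < s" "inverse s *\<^sub>R v \<in> W" by (auto simp: S_def)
      moreover have "inverse (c * s) *\<^sub>R (c *\<^sub>R v) = inverse s *\<^sub>R v" using c by simp
      ultimately have "c * s \<in> S (c *\<^sub>R v)" using c unfolding S_def mem_Collect_eq
        by (metis mult_pos_pos)
      then have "p (c *\<^sub>R v) \<le> c * s" by (rule plow)
      then show "p (c *\<^sub>R v) / c \<le> s" using c by (simp add: field_simps)
    qed
    moreover have "c * p v \<le> p (c *\<^sub>R v)"
    proof (rule pgr)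
      fix t assume "t \<in> S (c *\<^sub>R v)"
      then have "t / c \<in> S v" using c by (simp add: S_def field_simps)
      then have "p v \<le> t / c" by (rule plow)
      then show "c * p v \<le> t" using c by (simp add: field_simps)
    qed
    ultimately show ?thesis using c by (simp add: field_simps)
  qed
  have sub: "p (u + w) \<le> p u + p w" for u w
  proof -
    have key: "p (u + w) \<le> s + t" if s: "s \<in> S u" and t: "t \<in> S w" for s t
    proof -
      have sp: "0 < s" "inverse s *\<^sub>R u \<in> W" and tp: "0 < t" "inverse t *\<^sub>R w \<in> W"
        using s t by (auto simp: S_def)
      have "(s/(s+t)) *\<^sub>R (inverse s *\<^sub>R u) + (t/(s+t)) *\<^sub>R (inverse t *\<^sub>R w) \<in> W"
        using convexD[OF W(2) sp(2) tp(2), of "s/(s+t)" "t/(s+t)"] sp tp by (simp add: add_divide_distrib[symmetric])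
      moreover have "(s/(s+t)) *\<^sub>R (inverse s *\<^sub>R u) + (t/(s+t)) *\<^sub>R (inverse t *\<^sub>R w) = inverse (s+t) *\<^sub>R (u + w)"
      proof -
        have "s * inverse (s + t) * inverse s = inverse (s + t)" "t * inverse (s + t) * inverse t = inverse (s + t)"
          using sp tp by (simp_all add: field_simps)
        then show ?thesis by (simp only: scaleR_scaleR scaleR_add_right divide_inverse mult.commute)
      qed
      ultimately have "s + t \<in> S (u + w)" using sp tp by (simp add: S_def)
      then show ?thesis by (rule plow)
    qed
    have "p (u + w) - p u \<le> t" if t: "t \<in> S w" for t
    proof -
      have "p (u + w) - t \<le> p u" by (rule pgr) (use key[OF _ t] in force)
      then show ?thesis by simp
    qed
    then have "p (u + w) - p u \<le> p w" by (intro pgr) auto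
    then show ?thesis by simp
  qed
  obtain f where f: "linear f" "\<And>v. f v \<le> p v" "f x0 = p x0"
    using hb_ext[of p x0, OF sub hom nn] px0 by auto
  have fdiff: "f z - f z0 = (1/k) * f (k *\<^sub>R (z + - z0))" if "k > 0" for z z0 k
    using that f(1) by (simp add: linear_diff linear_scale linear_add linear_neg field_simps)
  have "continuous_on UNIV f"
    unfolding continuous_on_topological
  proof (intro ballI allI impI)
    fix z0 B assume "z0 \<in> (UNIV::'x set)" "open B" "f z0 \<in> B"
    then obtain e where e: "e > 0" "ball (f z0) e \<subseteq> B" by (auto simp: open_contains_ball)
    define k where "k = 2 / e"
    have k: "k > 0" using e k_def by simp
    define A where "A = ((\<lambda>z. k *\<^sub>R (z + - z0)) -` W) \<inter> ((\<lambda>z. (-k) *\<^sub>R (z + - z0)) -` W)"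
    have "open A" unfolding A_def
      by (intro open_Int ov[OF caff W(1)])
    moreover have "z0 \<in> A" using W by (simp add: A_def)
    moreover have "f z \<in> B" if "z \<in> A" for z
    proof -
      have a1: "f (k *\<^sub>R (z + - z0)) \<le> 1" using f(2) pW that A_def by (meson IntD1 IntD2 order.trans vimageE)
      have a2: "f ((-k) *\<^sub>R (z + - z0)) \<le> 1" using f(2) pW that A_def by (meson IntD1 IntD2 order.trans vimageE)
      have "f ((-k) *\<^sub>R (z + - z0)) = - f (k *\<^sub>R (z + - z0))" using f(1) by (simp add: linear_scale linear_neg)
      then have "\<bar>f (k *\<^sub>R (z + - z0))\<bar> \<le> 1" using a1 a2 by linarith
      then have "\<bar>f z - f z0\<bar> \<le> 1/k" using fdiff[OF k, of z z0] k by (simp add: abs_mult divide_right_mono)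
      then have "dist (f z0) (f z) < e" using e k_def by (simp add: dist_real_def abs_minus_commute)
      then show ?thesis using e by auto
    qed
    ultimately show "\<exists>A. open A \<and> z0 \<in> A \<and> (\<forall>y\<in>UNIV. y \<in> A \<longrightarrow> f y \<in> B)" by blast
  qed
  then have "f \<in> topdual" using f(1) by (simp add: topdual_def)
  moreover have "f x0 > 0" using f(3) px0 by simp
  ultimately show ?thesis by blast
qed
lemma meas_countable:
  fixes \<mu> :: "'a set \<Rightarrow> ereal"
  assumes sa: "sigma_algebra \<Omega> \<Sigma>" and mu: "sigma_finite_ca_measure \<Omega> \<Sigma> \<mu>"
  and FS: "F \<subseteq> \<Sigma>" and Fd: "disjoint F"
  shows "countable {E\<in>F. \<mu> E > 0}"
proof -
  interpret sigma_algebra \<Omega> \<Sigma> by (rule sa)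
  have nm: "\<And>E. E \<in> \<Sigma> \<Longrightarrow> \<mu> E \<noteq> -\<infinity>" and m0: "\<mu> {} = 0"
    and ca: "\<And>A. range A \<subseteq> \<Sigma> \<Longrightarrow> disjoint_family A \<Longrightarrow> (\<lambda>n. \<mu> (A n)) sums \<mu> (\<Union>n. A n)"
    using mu unfolding sigma_finite_ca_measure_def by auto
  obtain B :: "nat \<Rightarrow> 'a set" where B: "range B \<subseteq> \<Sigma>" "(\<Union>n. B n) = \<Omega>" "\<And>n. \<mu> (B n) < \<infinity>"
    using mu unfolding sigma_finite_ca_measure_def by blast
  define C where "C = disjointed B"
  have C: "range C \<subseteq> \<Sigma>" "disjoint_family C" "(\<Union>n. C n) = \<Omega>" "\<And>n. C n \<subseteq> B n"
    using range_disjointed_sets[OF B(1)] disjoint_family_disjointed UN_disjointed_eq[of B] B(2)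
      disjointed_subset[of B] unfolding C_def by blast+
  have fin: "\<mu> A < \<infinity>" if A: "A \<in> \<Sigma>" "A \<subseteq> C k" for A k
  proof -
    define S where "S n = (if n = 0 then A else if n = Suc 0 then B k - A else {})" for n :: nat
    have "B k \<in> \<Sigma>" using B(1) by auto
    then have BA: "B k - A \<in> \<Sigma>" using A(1) by (rule Diff)
    then have "range S \<subseteq> \<Sigma>" using A by (auto simp: S_def)
    moreover have "disjoint_family S" by (auto simp: disjoint_family_on_def S_def)
    moreover have "(\<Union>n. S n) = B k" using A C(4)[of k]
      by (auto simp: S_def split: if_splits)
    ultimately have s1: "(\<lambda>n. \<mu> (S n)) sums \<mu> (B k)" using ca by metis
    have "(\<lambda>n. \<mu> (S n)) sums (\<Sum>n\<in>{0, Suc 0}. \<mu> (S n))"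
      by (rule sums_finite) (auto simp: S_def m0)
    then have "\<mu> (B k) = \<mu> A + \<mu> (B k - A)" using sums_unique2[OF s1] by (simp add: S_def)
    moreover have "\<mu> (B k - A) \<noteq> -\<infinity>" using nm[OF BA] .
    ultimately show ?thesis using B(3)[of k] by (cases "\<mu> A"; cases "\<mu> (B k - A)") auto
  qed
  have pos: "\<exists>k m. \<mu> (E \<inter> C k) > ereal (inverse (real (Suc m)))" if E: "E \<in> F" "\<mu> E > 0" for E
  proof -
    have ES: "E \<in> \<Sigma>" using E FS by auto
    have "range (\<lambda>k. E \<inter> C k) \<subseteq> \<Sigma>" using ES C(1) by auto
    moreover have "disjoint_family (\<lambda>k. E \<inter> C k)" using C(2) by (auto simp: disjoint_family_on_def)
    moreover have "(\<Union>k. E \<inter> C k) = E" using C(3) ES sets_into_space by auto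
    ultimately have sm: "(\<lambda>k. \<mu> (E \<inter> C k)) sums \<mu> E" using ca by metis
    obtain k where k: "\<mu> (E \<inter> C k) > 0"
    proof (rule ccontr)
      assume "\<not> thesis"
      then have "\<And>k. \<mu> (E \<inter> C k) \<le> 0" using that by (meson not_le)
      then have "\<And>n. (\<Sum>i<n. \<mu> (E \<inter> C i)) \<le> 0" by (simp add: sum_nonpos)
      then have "\<mu> E \<le> 0" using sm unfolding sums_def by (intro LIMSEQ_le_const2) auto
      then show False using E by simp
    qed
    show ?thesis
    proof (cases "\<mu> (E \<inter> C k)")
      case (real r)
      then have "r > 0" using k by simp
      then obtain n where n: "n > 0" "inverse (real n) < r" using ex_inverse_of_nat_less by blast
      then have "Suc (n - 1) = n" by simp
      then show ?thesis using n real by (intro exI[of _ k] exI[of _ "n - 1"]) simp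
    next
      case PInf then show ?thesis by (intro exI[of _ k] exI[of _ 0]) simp
    next
      case MInf then show ?thesis using k by simp
    qed
  qed
  have finT: "finite {E\<in>F. \<mu> (E \<inter> C k) > ereal (inverse (real (Suc m)))}" for k m
  proof (rule ccontr)
    define e where "e = inverse (real (Suc m))"
    have e: "e > 0" by (simp add: e_def)
    assume "infinite {E\<in>F. \<mu> (E \<inter> C k) > ereal (inverse (real (Suc m)))}"
    then obtain g :: "nat \<Rightarrow> 'a set" where g: "inj g" "range g \<subseteq> {E\<in>F. \<mu> (E \<inter> C k) > ereal e}"
      using infinite_countable_subset e_def by metis
    define A where "A n = g n \<inter> C k" for n
    have AS: "range A \<subseteq> \<Sigma>"
    proof
      fix X assume "X \<in> range A"
      then obtain n where n: "X = g n \<inter> C k" by (auto simp: A_def)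
      have "g n \<in> \<Sigma>" using g(2) FS by auto
      moreover have "C k \<in> \<Sigma>" using C(1) by auto
      ultimately show "X \<in> \<Sigma>" using n by (simp add: Int)
    qed
    have "disjoint_family A" unfolding disjoint_family_on_def A_def
    proof (intro ballI impI)
      fix i j :: nat assume "i \<noteq> j"
      then have "g i \<noteq> g j" using g(1) by (meson injD)
      moreover have "g i \<in> F" "g j \<in> F" using g(2) by auto
      ultimately have "g i \<inter> g j = {}" using Fd unfolding disjoint_def by blast
      then show "g i \<inter> C k \<inter> (g j \<inter> C k) = {}" by blast
    qed
    then have sm: "(\<lambda>n. \<mu> (A n)) sums \<mu> (\<Union>n. A n)" using ca AS by metis
    have US: "(\<Union>n. A n) \<in> \<Sigma>" using AS by auto
    have "\<mu> (\<Union>n. A n) < \<infinity>" using fin[OF US] by (auto simp: A_def)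
    moreover have "\<mu> (\<Union>n. A n) \<noteq> -\<infinity>" using nm US by auto
    ultimately obtain R where R: "\<mu> (\<Union>n. A n) = ereal R" by (cases "\<mu> (\<Union>n. A n)") auto
    obtain n0 :: nat where n0: "R < real n0 * e" using ex_less_of_nat_mult[OF e] by blast
    have ps: "ereal (real n * e) \<le> (\<Sum>i<n. \<mu> (A i))" for n
    proof -
      have "(\<Sum>i<n. ereal e) \<le> (\<Sum>i<n. \<mu> (A i))"
      proof (rule sum_mono)
        fix i assume "i \<in> {..<n}"
        have "g i \<in> range g" by simp
        then have "ereal e < \<mu> (g i \<inter> C k)" using g(2) by blast
        then show "ereal e \<le> \<mu> (A i)" by (simp add: A_def)
      qed
      then show ?thesis by simp
    qed
    have "ereal (real n0 * e) \<le> \<mu> (\<Union>n. A n)"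
    proof (rule LIMSEQ_le_const)
      show "(\<lambda>n. \<Sum>i<n. \<mu> (A i)) \<longlonglongrightarrow> \<mu> (\<Union>n. A n)" using sm unfolding sums_def .
      have "\<forall>n\<ge>n0. ereal (real n0 * e) \<le> (\<Sum>i<n. \<mu> (A i))"
      proof (intro allI impI)
        fix n assume "n \<ge> n0"
        then have "real n0 * e \<le> real n * e" using e by (simp add: mult_right_mono)
        then show "ereal (real n0 * e) \<le> (\<Sum>i<n. \<mu> (A i))" using ps[of n] by (meson ereal_less_eq(3) order_trans)
      qed
      then show "\<exists>N. \<forall>n\<ge>N. ereal (real n0 * e) \<le> (\<Sum>i<n. \<mu> (A i))" by blast
    qed
    then show False using R n0 by simp
  qed
  have "{E\<in>F. \<mu> E > 0} \<subseteq> (\<Union>km\<in>UNIV. {E\<in>F. \<mu> (E \<inter> C (fst km)) > ereal (inverse (real (Suc (snd km))))})"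
    using pos by fastforce
  moreover have "countable (\<Union>km\<in>(UNIV :: (nat \<times> nat) set). {E\<in>F. \<mu> (E \<inter> C (fst km)) > ereal (inverse (real (Suc (snd km))))})"
  proof (rule Countable_Set.countable_UN)
    show "countable (UNIV :: (nat \<times> nat) set)" by simp
    fix km :: "nat \<times> nat"
    show "countable {E\<in>F. \<mu> (E \<inter> C (fst km)) > ereal (inverse (real (Suc (snd km))))}"
      by (rule countable_finite, rule finT)
  qed
  ultimately show ?thesis using countable_subset by blast
qed
lemma wstar_cm: "continuous_map (powertop_real UNIV) euclideanreal (\<lambda>h::'x\<Rightarrow>real. h x)"
  by (rule continuous_map_product_projection) (rule UNIV_I)

lemma wstar_open: "openin (powertop_real UNIV) {h::'x\<Rightarrow>real. 0 < h x}"
  using openin_continuous_map_preimage[OF wstar_cm, of "{0<..}" x] by simp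

theorem theorem3p5:
  fixes \<Omega> :: "'a set" and \<Sigma> :: "'a set set"
    and M :: "'a set \<Rightarrow> 'x::{real_vector, t2_space} set"
  assumes "sigma_algebra \<Omega> \<Sigma>"
    and "tvs_ops_continuous TYPE('x)"
    and "locally_convex TYPE('x)"
    and "separable_top (weak_star_topology :: ('x \<Rightarrow> real) topology)"
    and "multimeasure \<Omega> \<Sigma> M"
  shows "countable_chain_condition \<Sigma> M"
  unfolding countable_chain_condition_def
proof (intro allI impI)
  fix F assume F: "F \<subseteq> \<Sigma> - null_sets_mm \<Sigma> M \<and> disjoint F"
  obtain D where D: "countable D" "D \<subseteq> topspace (weak_star_topology :: ('x \<Rightarrow> real) topology)"
    "(weak_star_topology :: ('x \<Rightarrow> real) topology) closure_of D = topspace weak_star_topology"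
    using assms(4) unfolding separable_top_def by blast
  have ts: "topspace (weak_star_topology :: ('x \<Rightarrow> real) topology) = topdual"
    by (simp add: weak_star_topology_def)
  have FS: "F \<subseteq> \<Sigma>" and Fd: "disjoint F" using F by auto
  have mm: "\<And>E. E \<in> \<Sigma> \<Longrightarrow> M E \<in> cX"
    and mf: "\<And>f. f \<in> topdual \<Longrightarrow> sigma_finite_ca_measure \<Omega> \<Sigma> (\<lambda>E. supp_fun f (M E))"
    using assms(5) unfolding multimeasure_def by auto
  have cover: "F \<subseteq> (\<Union>g\<in>D. {E\<in>F. supp_fun g (M E) > 0})"
  proof
    fix E assume E: "E \<in> F"
    then have ES: "E \<in> \<Sigma>" and En: "M E \<noteq> {0}" using F by (auto simp: null_sets_mm_def)
    have "M E \<noteq> {}" using mm[OF ES] by (simp add: cX_def)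
    then obtain x where x: "x \<in> M E" "x \<noteq> 0" using En by blast
    obtain f where f: "f \<in> topdual" "f x > 0" using dual_sep[OF assms(2,3) x(2)] by blast
    have fcl: "f \<in> (weak_star_topology :: ('x \<Rightarrow> real) topology) closure_of D" using D(3) ts f(1) by simp
    have op: "openin (weak_star_topology :: ('x \<Rightarrow> real) topology) ({h. 0 < h x} \<inter> topdual)"
      unfolding weak_star_topology_def openin_subtopology
    proof (intro exI conjI)
      show "openin (powertop_real UNIV) {h::'x\<Rightarrow>real. 0 < h x}" by (rule wstar_open)
    qed (rule refl)
    obtain g where g: "g \<in> D" "g \<in> {h. 0 < h x} \<inter> topdual"
    proof -
      have cl: "\<forall>T. f \<in> T \<and> openin (weak_star_topology :: ('x \<Rightarrow> real) topology) T \<longrightarrow> (\<exists>y. y \<in> D \<and> y \<in> T)"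
        using fcl unfolding in_closure_of by (elim conjE)
      have "f \<in> {h. 0 < h x} \<inter> topdual" using f by simp
      then have "\<exists>y. y \<in> D \<and> y \<in> {h. 0 < h x} \<inter> topdual"
        using mp[OF spec[OF cl, of "{h. 0 < h x} \<inter> topdual"] conjI[OF _ op]] by simp
      then show ?thesis using that by blast
    qed
    have "ereal (g x) \<le> supp_fun g (M E)" unfolding supp_fun_def using x(1) by (rule SUP_upper)
    moreover have "(0::ereal) < ereal (g x)" using g(2) by simp
    ultimately have "supp_fun g (M E) > 0" by (rule order.strict_trans2[rotated])
    then show "E \<in> (\<Union>g\<in>D. {E\<in>F. supp_fun g (M E) > 0})" using g(1) E by blast
  qed
  have "countable (\<Union>g\<in>D. {E\<in>F. supp_fun g (M E) > 0})"
  proof (rule countable_UN)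
    show "countable D" by (rule D(1))
    fix g assume "g \<in> D"
    then have "g \<in> topdual" using D(2) ts by auto
    then show "countable {E\<in>F. supp_fun g (M E) > 0}"
      using meas_countable[OF assms(1) mf FS Fd] by blast
  qed
  then show "countable F" using cover countable_subset by blast
qed

end
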